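(* Let $S[1..n]$ be a string. Given the lcp array and rank array of $S$, one can compute all useful LLRs of $S$ (listed in increasing order of start position) in $O(n)$ time and space.
   Context: For $1\le i\le j\le n$, $S[i..j]=S[i]\cdots S[j]$. A substring is unique if it has no other occurrence starting at a different position; it is a repeat otherwise. The left-bounded longest repeat starting at position $k$, $\mathrm{LLR}_k$, is a repeat $S[k..j]$ such that either $j=n$ or $S[k..j+1]$ is unique (it does not exist if $S[k]$ is unique). An LLR is useless if its position interval is contained in that of another LLR; otherwise it is useful. The suffix array $SA[1..n]$ is the permutation of $\{1,\ldots,n\}$ listing the starting positions of suffixes of $S$ in increasing lexicographic order (a proper prefix is smaller). The rank array is its inverse: $\mathrm{Rank}[i]=j$ iff $SA[j]=i$. The lcp array $\mathrm{LCP}[1..n+1]$ has $\mathrm{LCP}[1]=\mathrm{LCP}[n+1]=0$ and, for $2\le i\le n$, $\mathrm{LCP}[i]$ is the length of the longest common prefix of $S[SA[i-1]..n]$ and $S[SA[i]..n]$. Complexity is in the word-RAM model with each integer in $\{0,\ldots,n+1\}$ occupying a constant number of words. *)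

theory Defs
  imports Main
begin

text \<open>Strings are lists; positions are 1-based: S[i] = S ! (i-1).\<close>

definition substr :: "'a list \<Rightarrow> nat \<Rightarrow> nat \<Rightarrow> 'a list" where
  "substr S i j = take (Suc j - i) (drop (i - 1) S)"

definition unique_sub :: "'a list \<Rightarrow> nat \<Rightarrow> nat \<Rightarrow> bool" where
  "unique_sub S i j \<longleftrightarrow>
     (\<forall>k. 1 \<le> k \<and> k + (j - i) \<le> length S \<and> substr S k (k + (j - i)) = substr S i j \<longrightarrow> k = i)"

definition repeat_sub :: "'a list \<Rightarrow> nat \<Rightarrow> nat \<Rightarrow> bool" where
  "repeat_sub S i j \<longleftrightarrow> \<not> unique_sub S i j"

definition is_LLR :: "'a list \<Rightarrow> nat \<Rightarrow> nat \<Rightarrow> bool" where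
  "is_LLR S k j \<longleftrightarrow> 1 \<le> k \<and> k \<le> j \<and> j \<le> length S \<and> repeat_sub S k j \<and>
     (j = length S \<or> unique_sub S k (Suc j))"

definition useful_LLR :: "'a list \<Rightarrow> nat \<Rightarrow> nat \<Rightarrow> bool" where
  "useful_LLR S k j \<longleftrightarrow> is_LLR S k j \<and>
     \<not> (\<exists>k' j'. is_LLR S k' j' \<and> (k', j') \<noteq> (k, j) \<and> k' \<le> k \<and> j \<le> j')"

definition suf :: "'a list \<Rightarrow> nat \<Rightarrow> 'a list" where
  "suf S i = drop (i - 1) S"

text \<open>Strict lexicographic order on lists; a proper prefix is smaller.\<close>
definition lex_less :: "'a::linorder list \<Rightarrow> 'a list \<Rightarrow> bool" where
  "lex_less xs ys \<longleftrightarrow> (xs, ys) \<in> lexord {(a, b). a < b}"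

definition is_SA :: "'a::linorder list \<Rightarrow> (nat \<Rightarrow> nat) \<Rightarrow> bool" where
  "is_SA S SA \<longleftrightarrow> bij_betw SA {1..length S} {1..length S} \<and>
     (\<forall>i j. 1 \<le> i \<and> i < j \<and> j \<le> length S \<longrightarrow> lex_less (suf S (SA i)) (suf S (SA j)))"

definition is_rank :: "'a::linorder list \<Rightarrow> (nat \<Rightarrow> nat) \<Rightarrow> (nat \<Rightarrow> nat) \<Rightarrow> bool" where
  "is_rank S SA Rank \<longleftrightarrow> (\<forall>i j. 1 \<le> i \<and> i \<le> length S \<and> 1 \<le> j \<and> j \<le> length S \<longrightarrow>
     (Rank i = j \<longleftrightarrow> SA j = i))"

fun lcp_len :: "'a list \<Rightarrow> 'a list \<Rightarrow> nat" where
  "lcp_len (x # xs) (y # ys) = (if x = y then Suc (lcp_len xs ys) else 0)"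
| "lcp_len _ _ = 0"

definition is_LCP :: "'a::linorder list \<Rightarrow> (nat \<Rightarrow> nat) \<Rightarrow> (nat \<Rightarrow> nat) \<Rightarrow> bool" where
  "is_LCP S SA LCP \<longleftrightarrow> LCP 1 = 0 \<and> LCP (Suc (length S)) = 0 \<and>
     (\<forall>i. 2 \<le> i \<and> i \<le> length S \<longrightarrow> LCP i = lcp_len (suf S (SA (i - 1))) (suf S (SA i)))"

text \<open>Registers and memory cells hold natural numbers; each run is additionally required
  (in the theorem) to keep all stored values polynomially bounded in n, i.e. each value
  occupies O(1) words of Theta(log n) bits.  Instructions take unit time.\<close>

datatype instr =
    LoadConst nat nat
  | Add nat nat nat
  | Sub nat nat nat
  | Mul nat nat nat
  | Div nat nat nat
  | Mod nat nat nat
  | Less nat nat nat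
  | Eq nat nat nat
  | Load nat nat
  | Store nat nat
  | Jz nat nat
  | Jmp nat

record config =
  pc :: nat
  regs :: "nat \<Rightarrow> nat"
  mem :: "nat \<Rightarrow> nat"

fun exec :: "instr \<Rightarrow> config \<Rightarrow> config" where
  "exec (LoadConst r v) c = c\<lparr>pc := Suc (pc c), regs := (regs c)(r := v)\<rparr>"
| "exec (Add r a b) c = c\<lparr>pc := Suc (pc c), regs := (regs c)(r := regs c a + regs c b)\<rparr>"
| "exec (Sub r a b) c = c\<lparr>pc := Suc (pc c), regs := (regs c)(r := regs c a - regs c b)\<rparr>"
| "exec (Mul r a b) c = c\<lparr>pc := Suc (pc c), regs := (regs c)(r := regs c a * regs c b)\<rparr>"
| "exec (Div r a b) c = c\<lparr>pc := Suc (pc c), regs := (regs c)(r := regs c a div regs c b)\<rparr>"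
| "exec (Mod r a b) c = c\<lparr>pc := Suc (pc c), regs := (regs c)(r := regs c a mod regs c b)\<rparr>"
| "exec (Less r a b) c =
     c\<lparr>pc := Suc (pc c), regs := (regs c)(r := (if regs c a < regs c b then 1 else 0))\<rparr>"
| "exec (Eq r a b) c =
     c\<lparr>pc := Suc (pc c), regs := (regs c)(r := (if regs c a = regs c b then 1 else 0))\<rparr>"
| "exec (Load r a) c = c\<lparr>pc := Suc (pc c), regs := (regs c)(r := mem c (regs c a))\<rparr>"
| "exec (Store a r) c = c\<lparr>pc := Suc (pc c), mem := (mem c)(regs c a := regs c r)\<rparr>"
| "exec (Jz r l) c = c\<lparr>pc := (if regs c r = 0 then l else Suc (pc c))\<rparr>"
| "exec (Jmp l) c = c\<lparr>pc := l\<rparr>"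

definition halted :: "instr list \<Rightarrow> config \<Rightarrow> bool" where
  "halted P c \<longleftrightarrow> length P \<le> pc c"

definition step :: "instr list \<Rightarrow> config \<Rightarrow> config" where
  "step P c = (if halted P c then c else exec (P ! pc c) c)"

definition run :: "instr list \<Rightarrow> nat \<Rightarrow> config \<Rightarrow> config" where
  "run P t c = (step P ^^ t) c"

definition addr_used :: "instr list \<Rightarrow> config \<Rightarrow> nat" where
  "addr_used P c = (if halted P c then 0 else
     (case P ! pc c of Load r a \<Rightarrow> regs c a | Store a r \<Rightarrow> regs c a | _ \<Rightarrow> 0))"

definition input_config :: "nat \<Rightarrow> (nat \<Rightarrow> nat) \<Rightarrow> (nat \<Rightarrow> nat) \<Rightarrow> config" where
  "input_config n Rank LCP =
     \<lparr>pc = 0, regs = (\<lambda>_. 0),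
      mem = (\<lambda>a. if a = 0 then n
                 else if a \<le> n then Rank a
                 else if a \<le> 2 * n + 1 then LCP (a - n)
                 else 0)\<rparr>"

definition output_of :: "config \<Rightarrow> (nat \<times> nat) list" where
  "output_of c = map (\<lambda>i. (mem c (regs c 1 + 2 * i), mem c (regs c 1 + 2 * i + 1)))
                     [0..<regs c 0]"

end

theory Submission
  imports Defs
begin

definition lex_le :: "'a::linorder list \<Rightarrow> 'a list \<Rightarrow> bool" where
 "lex_le x y \<longleftrightarrow> x = y \<or> lex_less x y"

lemma lcp_le_len: "lcp_len x y \<le> length x" "lcp_len x y \<le> length y"
  by (induction x y rule: lcp_len.induct; auto)+

lemma lcp_sym: "lcp_len x y = lcp_len y x"
  by (induction x y rule: lcp_len.induct; auto)

lemma lcp_ge_iff: "l \<le> lcp_len x y \<longleftrightarrow> l \<le> length x \<and> l \<le> length y \<and> take l x = take l y"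
proof (induction x y arbitrary: l rule: lcp_len.induct)
  case (1 x xs y ys)
  then show ?case by (cases l) auto
qed auto

lemma lcp_tl: "lcp_len (tl x) (tl y) = lcp_len x y - 1 \<or> lcp_len x y = 0"
  by (cases x; cases y; auto)

lemma lex_mono1: "lex_le x y \<Longrightarrow> lex_le y z \<Longrightarrow> lcp_len x z \<le> lcp_len y z"
proof (induction x arbitrary: y z)
  case Nil then show ?case by simp
next
  case (Cons a x)
  then show ?case
    by (cases y; cases z; auto simp: lex_le_def lex_less_def)
qed

lemma lex_mono2: "lex_le x y \<Longrightarrow> lex_le y z \<Longrightarrow> lcp_len x z \<le> lcp_len x y"
proof (induction x arbitrary: y z)
  case Nil then show ?case by simp
next
  case (Cons a x)
  then show ?case
    by (cases y; cases z; auto simp: lex_le_def lex_less_def)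
qed

lemma substr_take: "substr S p (p + d) = take (Suc d) (suf S p)"
  by (simp add: substr_def suf_def Suc_diff_le)

lemma len_suf: "length (suf S i) = length S - (i - 1)"
  by (simp add: suf_def)

lemma suf_Suc: "1 \<le> i \<Longrightarrow> suf S (Suc i) = tl (suf S i)"
  by (cases i) (auto simp: suf_def drop_Suc tl_drop)

locale sactx =
  fixes S :: "'a::linorder list" and SA Rank LCP :: "nat \<Rightarrow> nat"
  assumes SA: "is_SA S SA" and RK: "is_rank S SA Rank" and LC: "is_LCP S SA LCP"
begin

definition Lk :: "nat \<Rightarrow> nat" where
  "Lk k = max (LCP (Rank k)) (LCP (Suc (Rank k)))"

lemma SA_range: "1 \<le> r \<Longrightarrow> r \<le> length S \<Longrightarrow> 1 \<le> SA r \<and> SA r \<le> length S"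
  using SA unfolding is_SA_def bij_betw_def by auto

lemma Rank_ok: assumes "1 \<le> k" "k \<le> length S"
  shows "1 \<le> Rank k \<and> Rank k \<le> length S \<and> SA (Rank k) = k"
proof -
  have "k \<in> SA ` {1..length S}" using SA assms unfolding is_SA_def bij_betw_def by auto
  then obtain r where r: "r \<in> {1..length S}" "SA r = k" by auto
  then have "Rank k = r" using RK assms unfolding is_rank_def by auto
  then show ?thesis using r by auto
qed

lemma Rank_SA: "1 \<le> r \<Longrightarrow> r \<le> length S \<Longrightarrow> Rank (SA r) = r"
  using RK SA_range unfolding is_rank_def by auto

lemma sa_le: "1 \<le> q \<Longrightarrow> q \<le> q' \<Longrightarrow> q' \<le> length S \<Longrightarrow> lex_le (suf S (SA q)) (suf S (SA q'))"
  using SA unfolding is_SA_def lex_le_def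
  by (cases "q = q'") auto

lemma LCP_bound: "1 \<le> i \<Longrightarrow> i \<le> Suc (length S) \<Longrightarrow> LCP i \<le> length S"
proof -
  assume a: "1 \<le> i" "i \<le> Suc (length S)"
  show ?thesis
  proof (cases "2 \<le> i \<and> i \<le> length S")
    case True
    then have "LCP i = lcp_len (suf S (SA (i - 1))) (suf S (SA i))" using LC unfolding is_LCP_def by auto
    also have "\<dots> \<le> length (suf S (SA i))" by (rule lcp_le_len)
    also have "\<dots> \<le> length S" by (simp add: len_suf)
    finally show ?thesis .
  next
    case False
    then have "i = 1 \<or> i = Suc (length S)" using a by auto
    then show ?thesis using LC unfolding is_LCP_def by auto
  qed
qed

lemma A_bound: assumes k: "1 \<le> k" "k \<le> length S" and p: "1 \<le> p" "p \<le> length S" "p \<noteq> k"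
  shows "lcp_len (suf S k) (suf S p) \<le> Lk k"
proof -
  define r where "r = Rank k"
  define q where "q = Rank p"
  have r: "1 \<le> r" "r \<le> length S" "SA r = k" using Rank_ok[OF k] r_def by auto
  have q: "1 \<le> q" "q \<le> length S" "SA q = p" using Rank_ok[OF p(1,2)] q_def by auto
  have "q \<noteq> r" using r q p by auto
  show ?thesis
  proof (cases "q < r")
    case True
    have L: "LCP r = lcp_len (suf S (SA (r - 1))) (suf S (SA r))" using LC True q r unfolding is_LCP_def by auto
    have "lcp_len (suf S (SA q)) (suf S (SA r)) \<le> lcp_len (suf S (SA (r - 1))) (suf S (SA r))"
      by (rule lex_mono1; rule sa_le) (use True q r in auto)
    then have "lcp_len (suf S p) (suf S k) \<le> LCP r" using L q r by simp
    then show ?thesis unfolding Lk_def r_def[symmetric] by (simp add: lcp_sym)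
  next
    case False
    then have F: "r < q" using \<open>q \<noteq> r\<close> by auto
    have L: "LCP (Suc r) = lcp_len (suf S (SA r)) (suf S (SA (Suc r)))" using LC F q r unfolding is_LCP_def by auto
    have "lcp_len (suf S (SA r)) (suf S (SA q)) \<le> lcp_len (suf S (SA r)) (suf S (SA (Suc r)))"
      by (rule lex_mono2; rule sa_le) (use F q r in auto)
    then have "lcp_len (suf S k) (suf S p) \<le> LCP (Suc r)" using L q r by simp
    then show ?thesis unfolding Lk_def r_def[symmetric] by simp
  qed
qed

lemma B_wit: assumes k: "1 \<le> k" "k \<le> length S" and L: "1 \<le> Lk k"
  shows "\<exists>p. 1 \<le> p \<and> p \<le> length S \<and> p \<noteq> k \<and> lcp_len (suf S k) (suf S p) = Lk k"
proof -
  define r where "r = Rank k"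
  have r: "1 \<le> r" "r \<le> length S" "SA r = k" using Rank_ok[OF k] r_def by auto
  show ?thesis
  proof (cases "LCP (Suc r) \<le> LCP r")
    case True
    then have E: "Lk k = LCP r" unfolding Lk_def r_def by simp
    then have "r \<noteq> 1" using L LC unfolding is_LCP_def by auto
    then have L2: "LCP r = lcp_len (suf S (SA (r - 1))) (suf S (SA r))" using LC r unfolding is_LCP_def by auto
    have "SA (r - 1) \<noteq> k"
    proof
      assume "SA (r - 1) = k"
      then have "Rank (SA (r - 1)) = r" using r_def by simp
      moreover have "Rank (SA (r - 1)) = r - 1" by (rule Rank_SA) (use r \<open>r \<noteq> 1\<close> in auto)
      ultimately show False using r by arith
    qed
    then show ?thesis using SA_range[of "r - 1"] r \<open>r \<noteq> 1\<close> E L2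
      by (intro exI[of _ "SA (r - 1)"]) (auto simp: lcp_sym)
  next
    case False
    then have E: "Lk k = LCP (Suc r)" unfolding Lk_def r_def by simp
    then have "Suc r \<noteq> Suc (length S)" using L LC unfolding is_LCP_def by auto
    then have rs: "Suc r \<le> length S" using r by auto
    then have L2: "LCP (Suc r) = lcp_len (suf S (SA r)) (suf S (SA (Suc r)))" using LC r unfolding is_LCP_def by auto
    have "SA (Suc r) \<noteq> k"
    proof
      assume "SA (Suc r) = k"
      then have "Rank (SA (Suc r)) = r" using r_def by simp
      then show False using Rank_SA[of "Suc r"] rs by auto
    qed
    then show ?thesis using SA_range[of "Suc r"] r rs E L2
      by (intro exI[of _ "SA (Suc r)"]) auto
  qed
qed

lemma Lk_le: assumes k: "1 \<le> k" "k \<le> length S" shows "Lk k \<le> length S - (k - 1)"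
proof (cases "Lk k = 0")
  case False
  then obtain p where "lcp_len (suf S k) (suf S p) = Lk k" using B_wit[OF k] by auto
  then show ?thesis using lcp_le_len(1)[of "suf S k" "suf S p"] by (simp add: len_suf)
qed simp

lemma repeat_iff: assumes "1 \<le> k" "k \<le> j" "j \<le> length S"
  shows "repeat_sub S k j \<longleftrightarrow> Suc (j - k) \<le> Lk k"
proof -
  define d where "d = j - k"
  have j: "j = k + d" using assms d_def by auto
  have "repeat_sub S k j \<longleftrightarrow> (\<exists>p. 1 \<le> p \<and> p + d \<le> length S \<and> p \<noteq> k \<and>
          take (Suc d) (suf S p) = take (Suc d) (suf S k))"
    unfolding repeat_sub_def unique_sub_def j by (auto simp: substr_take)
  also have "\<dots> \<longleftrightarrow> (\<exists>p. 1 \<le> p \<and> p \<le> length S \<and> p \<noteq> k \<and> Suc d \<le> lcp_len (suf S k) (suf S p))"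
    using assms j by (auto simp: lcp_ge_iff len_suf)
  also have "\<dots> \<longleftrightarrow> Suc d \<le> Lk k"
  proof
    assume "\<exists>p. 1 \<le> p \<and> p \<le> length S \<and> p \<noteq> k \<and> Suc d \<le> lcp_len (suf S k) (suf S p)"
    then obtain p where "1 \<le> p" "p \<le> length S" "p \<noteq> k" "Suc d \<le> lcp_len (suf S k) (suf S p)" by auto
    then show "Suc d \<le> Lk k" using A_bound[of k p] assms by auto
  next
    assume "Suc d \<le> Lk k"
    then show "\<exists>p. 1 \<le> p \<and> p \<le> length S \<and> p \<noteq> k \<and> Suc d \<le> lcp_len (suf S k) (suf S p)"
      using B_wit[of k] assms by fastforce
  qed
  finally show ?thesis using d_def by simp
qed

lemma LLR_iff: "is_LLR S k j \<longleftrightarrow> 1 \<le> k \<and> k \<le> length S \<and> 1 \<le> Lk k \<and> j = k + Lk k - 1"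
proof
  assume a: "is_LLR S k j"
  then have b: "1 \<le> k" "k \<le> j" "j \<le> length S" "repeat_sub S k j" "j = length S \<or> unique_sub S k (Suc j)"
    unfolding is_LLR_def by auto
  have r: "Suc (j - k) \<le> Lk k" using repeat_iff b by auto
  have "j = k + Lk k - 1"
  proof (cases "j = length S")
    case True then show ?thesis using r Lk_le[of k] b by auto
  next
    case False
    then have "unique_sub S k (Suc j)" "Suc j \<le> length S" using b by auto
    then have "\<not> Suc (Suc j - k) \<le> Lk k" using repeat_iff[of k "Suc j"] b unfolding repeat_sub_def by auto
    then show ?thesis using r b by auto
  qed
  then show "1 \<le> k \<and> k \<le> length S \<and> 1 \<le> Lk k \<and> j = k + Lk k - 1" using b r by auto
next
  assume a: "1 \<le> k \<and> k \<le> length S \<and> 1 \<le> Lk k \<and> j = k + Lk k - 1"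
  have le: "Lk k \<le> length S - (k - 1)" using Lk_le a by auto
  have r: "repeat_sub S k j" using repeat_iff[of k j] a le by auto
  have "j = length S \<or> unique_sub S k (Suc j)"
  proof (cases "j = length S")
    case False
    then have "Suc j \<le> length S" using a le by auto
    then show ?thesis using repeat_iff[of k "Suc j"] a unfolding repeat_sub_def by auto
  qed simp
  then show "is_LLR S k j" unfolding is_LLR_def using a le r by auto
qed

lemma E_step: assumes "1 \<le> i" "Suc i \<le> length S" shows "i + Lk i \<le> Suc i + Lk (Suc i)"
proof (cases "Lk i \<le> 1")
  case False
  obtain p where p: "1 \<le> p" "p \<le> length S" "p \<noteq> i" "lcp_len (suf S i) (suf S p) = Lk i"
    using B_wit[of i] assms False by auto
  have "Lk i \<le> length S - (p - 1)" using lcp_le_len(2)[of "suf S i" "suf S p"] p by (simp add: len_suf)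
  then have p2: "Suc p \<le> length S" using False by auto
  have "lcp_len (suf S (Suc i)) (suf S (Suc p)) = Lk i - 1"
    using lcp_tl[of "suf S i" "suf S p"] p False assms by (auto simp: suf_Suc)
  moreover have "lcp_len (suf S (Suc i)) (suf S (Suc p)) \<le> Lk (Suc i)"
    by (rule A_bound) (use p p2 assms in auto)
  ultimately show ?thesis by auto
qed auto

lemma E_mono: "1 \<le> i \<Longrightarrow> i' \<le> length S \<Longrightarrow> i \<le> i' \<Longrightarrow> i + Lk i \<le> i' + Lk i'"
proof (induction i')
  case (Suc m)
  show ?case
  proof (cases "i \<le> m")
    case True
    then have "i + Lk i \<le> m + Lk m" using Suc by auto
    with E_step[of m] Suc True show ?thesis by auto
  next
    case False
    then have "i = Suc m" using Suc by auto
    then show ?thesis by simp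
  qed
qed auto

lemma useful_iff: "useful_LLR S k j \<longleftrightarrow> is_LLR S k j \<and> (k = 1 \<or> Lk (k - 1) \<le> Lk k)"
proof
  assume u: "useful_LLR S k j"
  then have l: "is_LLR S k j" unfolding useful_LLR_def by auto
  then have b: "1 \<le> k" "k \<le> length S" "1 \<le> Lk k" "j = k + Lk k - 1" using LLR_iff by auto
  show "is_LLR S k j \<and> (k = 1 \<or> Lk (k - 1) \<le> Lk k)"
  proof (rule ccontr)
    assume "\<not> ?thesis"
    then have c: "k \<noteq> 1" "Lk k < Lk (k - 1)" using l by auto
    have 1: "is_LLR S (k - 1) (k - 1 + Lk (k - 1) - 1)" using LLR_iff b c by auto
    have 2: "(k - 1, k - 1 + Lk (k - 1) - 1) \<noteq> (k, j)" "k - 1 \<le> k" "j \<le> k - 1 + Lk (k - 1) - 1"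
      using b c by auto
    show False using u 1 2 unfolding useful_LLR_def by blast
  qed
next
  assume a: "is_LLR S k j \<and> (k = 1 \<or> Lk (k - 1) \<le> Lk k)"
  then have b: "1 \<le> k" "k \<le> length S" "1 \<le> Lk k" "j = k + Lk k - 1" using LLR_iff by auto
  have "\<not> (\<exists>k' j'. is_LLR S k' j' \<and> (k', j') \<noteq> (k, j) \<and> k' \<le> k \<and> j \<le> j')"
  proof
    assume "\<exists>k' j'. is_LLR S k' j' \<and> (k', j') \<noteq> (k, j) \<and> k' \<le> k \<and> j \<le> j'"
    then obtain k' j' where c: "is_LLR S k' j'" "(k', j') \<noteq> (k, j)" "k' \<le> k" "j \<le> j'" by auto
    then have d: "1 \<le> k'" "1 \<le> Lk k'" "j' = k' + Lk k' - 1" using LLR_iff by auto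
    have "k' \<noteq> k" using c d b by auto
    then have "k' \<le> k - 1" "k \<noteq> 1" using c d by auto
    then have "k' + Lk k' \<le> (k - 1) + Lk (k - 1)" using E_mono[of k' "k - 1"] d b by auto
    then show False using a b c d \<open>k \<noteq> 1\<close> by auto
  qed
  then show "useful_LLR S k j" unfolding useful_LLR_def using a by auto
qed

end


definition prg :: "instr list" where
 "prg = [Load 2 0, LoadConst 5 1, Add 1 2 2, Add 1 1 5, Add 1 1 5, LoadConst 3 1, Less 6 2 3, Jz 6 9, Jmp 32, Load 7 3, Add 8 7 2, Load 9 8, Add 8 8 5, Load 7 8, Less 8 9 7, Jz 8 17, Add 9 7 10, Less 8 9 4, Add 4 9 10, Jz 8 21, Jmp 30, Jz 9 30, Add 6 0 0, Add 6 6 1, Store 6 3, Add 7 3 9, Sub 7 7 5, Add 6 6 5, Store 6 7, Add 0 0 5, Add 3 3 5, Jmp 6]"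

lemma len_prg: "length prg = 32" by (simp add: prg_def)

lemma prg_nth:
  "prg ! 0 = Load 2 0"
  "prg ! 1 = LoadConst 5 1"
  "prg ! 2 = Add 1 2 2"
  "prg ! 3 = Add 1 1 5"
  "prg ! 4 = Add 1 1 5"
  "prg ! 5 = LoadConst 3 1"
  "prg ! 6 = Less 6 2 3"
  "prg ! 7 = Jz 6 9"
  "prg ! 8 = Jmp 32"
  "prg ! 9 = Load 7 3"
  "prg ! 10 = Add 8 7 2"
  "prg ! 11 = Load 9 8"
  "prg ! 12 = Add 8 8 5"
  "prg ! 13 = Load 7 8"
  "prg ! 14 = Less 8 9 7"
  "prg ! 15 = Jz 8 17"
  "prg ! 16 = Add 9 7 10"
  "prg ! 17 = Less 8 9 4"
  "prg ! 18 = Add 4 9 10"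
  "prg ! 19 = Jz 8 21"
  "prg ! 20 = Jmp 30"
  "prg ! 21 = Jz 9 30"
  "prg ! 22 = Add 6 0 0"
  "prg ! 23 = Add 6 6 1"
  "prg ! 24 = Store 6 3"
  "prg ! 25 = Add 7 3 9"
  "prg ! 26 = Sub 7 7 5"
  "prg ! 27 = Add 6 6 5"
  "prg ! 28 = Store 6 7"
  "prg ! 29 = Add 0 0 5"
  "prg ! 30 = Add 3 3 5"
  "prg ! 31 = Jmp 6"
  by (simp_all add: prg_def)

lemma run_Suc: "run P (Suc t) c = run P t (step P c)"
  by (simp add: run_def funpow_Suc_right del: funpow.simps)

lemma run_0: "run P 0 c = c" by (simp add: run_def)

lemma run_add: "run P (a + b) c = run P b (run P a c)"
  by (metis run_def funpow_add add.commute comp_apply)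

locale prog =
  fixes n :: nat and Rank LCP :: "nat \<Rightarrow> nat"
  assumes RB: "\<And>i. 1 \<le> i \<Longrightarrow> i \<le> n \<Longrightarrow> 1 \<le> Rank i \<and> Rank i \<le> n"
  and LB: "\<And>i. 1 \<le> i \<Longrightarrow> i \<le> Suc n \<Longrightarrow> LCP i \<le> n"
begin

abbreviation "c0 \<equiv> input_config n Rank LCP"

definition mem0 where "mem0 = mem c0"

definition Lf where "Lf k = max (LCP (Rank k)) (LCP (Suc (Rank k)))"
definition prevL where "prevL k = (if k \<le> 1 then 0 else Lf (k - 1))"
definition usef where "usef k \<longleftrightarrow> 1 \<le> Lf k \<and> \<not> Lf k < prevL k"
definition outs where "outs k = map (\<lambda>i. (i, i + Lf i - 1)) (filter usef [1..<k])"

definition G :: "config \<Rightarrow> bool" where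
  "G c \<longleftrightarrow> (\<forall>r. regs c r \<le> 4 * n + 8) \<and> (\<forall>a. mem c a \<le> 4 * n + 8) \<and> addr_used prg c \<le> 4 * n + 4"

definition R :: "config \<Rightarrow> nat \<Rightarrow> (config \<Rightarrow> bool) \<Rightarrow> bool" where
  "R c b Q \<longleftrightarrow> (\<exists>d\<le>b. (\<forall>t<d. G (run prg t c)) \<and> Q (run prg d c))"

lemma R_done: "Q c \<Longrightarrow> R c b Q"
  unfolding R_def by (intro exI[of _ 0]) (auto simp: run_0)

lemma R_stepA: assumes "0 < b" "G c" "R (step prg c) (b - 1) Q" shows "R c b Q"
proof -
  obtain d where d: "d \<le> b - 1" "\<forall>t<d. G (run prg t (step prg c))" "Q (run prg d (step prg c))"
    using assms(3) unfolding R_def by auto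
  have "\<forall>t<Suc d. G (run prg t c)"
  proof (intro allI impI)
    fix t assume "t < Suc d"
    then show "G (run prg t c)" using d assms(2) by (cases t) (auto simp: run_0 run_Suc)
  qed
  then show ?thesis unfolding R_def using d assms(1) by (intro exI[of _ "Suc d"]) (auto simp: run_Suc)
qed

lemma R_stepB: "0 < b \<Longrightarrow> pc c \<noteq> 6 \<Longrightarrow> G c \<Longrightarrow> R (step prg c) (b - 1) Q \<Longrightarrow> R c b Q"
  by (rule R_stepA)

lemma R_trans: assumes "R c b1 (\<lambda>c'. R c' b2 Q)" shows "R c (b1 + b2) Q"
proof -
  obtain d1 where d1: "d1 \<le> b1" "\<forall>t<d1. G (run prg t c)" "R (run prg d1 c) b2 Q"
    using assms unfolding R_def by auto
  obtain d2 where d2: "d2 \<le> b2" "\<forall>t<d2. G (run prg t (run prg d1 c))" "Q (run prg d2 (run prg d1 c))"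
    using d1(3) unfolding R_def by auto
  have "\<forall>t<d1 + d2. G (run prg t c)"
  proof (intro allI impI)
    fix t assume t: "t < d1 + d2"
    show "G (run prg t c)"
    proof (cases "t < d1")
      case False
      then obtain u where "t = d1 + u" "u < d2" using t by (metis add_diff_inverse_nat add_less_imp_less_left)
      then show ?thesis using d2 by (simp add: run_add)
    qed (use d1 in auto)
  qed
  then show ?thesis unfolding R_def using d1 d2 by (intro exI[of _ "d1 + d2"]) (auto simp: run_add)
qed

lemma R_mono: "R c b Q \<Longrightarrow> b \<le> b' \<Longrightarrow> (\<And>c. Q c \<Longrightarrow> Q' c) \<Longrightarrow> R c b' Q'"
  unfolding R_def by (meson order_trans)

lemma mem0_le: "mem0 a \<le> n"
  unfolding mem0_def input_config_def using RB LB by auto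

lemma mem0_rank: "1 \<le> k \<Longrightarrow> k \<le> n \<Longrightarrow> mem0 k = Rank k"
  unfolding mem0_def input_config_def by auto

lemma mem0_lcp: "1 \<le> i \<Longrightarrow> i \<le> Suc n \<Longrightarrow> mem0 (i + n) = LCP i"
  unfolding mem0_def input_config_def by auto

lemma Lf_le: "1 \<le> k \<Longrightarrow> k \<le> n \<Longrightarrow> Lf k \<le> n"
  unfolding Lf_def using RB[of k] LB by auto

lemma outs_Suc: "1 \<le> k \<Longrightarrow> outs (Suc k) = outs k @ (if usef k then [(k, k + Lf k - 1)] else [])"
  unfolding outs_def by simp

lemma outs_len: "length (outs k) \<le> k - 1"
  unfolding outs_def using length_filter_le[of usef "[1..<k]"] by simp

lemma outs_set: "x \<in> set (outs k) \<Longrightarrow> 1 \<le> fst x \<and> fst x < k \<and> snd x = fst x + Lf (fst x) - 1"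
  unfolding outs_def by auto

definition LoopInv :: "nat \<Rightarrow> config \<Rightarrow> bool" where
  "LoopInv k c \<longleftrightarrow> pc c = 6 \<and> 1 \<le> k \<and> k \<le> Suc n \<and> regs c 0 = length (outs k) \<and>
     regs c 1 = 2 * n + 2 \<and> regs c 2 = n \<and> regs c 3 = k \<and> regs c 4 = prevL k \<and>
     regs c 5 = 1 \<and> regs c 10 = 0 \<and> (\<forall>r. regs c r \<le> 4 * n + 8) \<and>
     (\<forall>a. a \<le> 2 * n + 1 \<longrightarrow> mem c a = mem0 a) \<and>
     (\<forall>i<length (outs k). mem c (2 * n + 2 + 2 * i) = fst (outs k ! i) \<and>
                          mem c (2 * n + 3 + 2 * i) = snd (outs k ! i)) \<and>
     (\<forall>a. mem c a \<le> 4 * n + 8)"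

lemma c0_simps: "pc c0 = 0" "regs c0 = (\<lambda>_. 0)" "mem c0 = mem0"
  by (auto simp: input_config_def mem0_def)

lemma mem0_le': "mem0 a \<le> 4 * n + 8" using mem0_le[of a] by simp

lemma mem0_0: "mem0 0 = n" by (simp add: mem0_def input_config_def)

lemma prg1: "prg ! Suc 0 = LoadConst 5 1" by (simp add: prg_def)

lemmas ex_simps = numeral_2_eq_2[symmetric] prg1 step_def halted_def len_prg prg_nth addr_used_def

lemma init: "R c0 6 (LoopInv 1)"
  apply (rule R_stepA, simp, simp add: G_def ex_simps c0_simps mem0_le', simp add: ex_simps c0_simps mem0_0)
  apply (rule R_stepB, simp, simp, simp add: G_def ex_simps mem0_le' c0_simps mem0_0, simp add: ex_simps c0_simps mem0_0)+
  apply (rule R_done)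
  apply (simp add: LoopInv_def c0_simps mem0_0 outs_def prevL_def mem0_le')
  done

lemma prevL_Suc: "1 \<le> k \<Longrightarrow> prevL (Suc k) = Lf k"
  unfolding prevL_def by auto

lemma loop_iter: assumes I: "LoopInv k c" and kn: "k \<le> n" shows "R c 24 (LoopInv (Suc k))"
proof -
  have I': "pc c = 6" "1 \<le> k" "regs c 0 = length (outs k)" "regs c 1 = 2 * n + 2" "regs c 2 = n"
    "regs c 3 = k" "regs c 4 = prevL k" "regs c 5 = 1" "regs c 10 = 0"
    using I unfolding LoopInv_def by auto
  have hR: "\<forall>r. regs c r \<le> 4 * n + 8" and hM: "\<forall>a. mem c a \<le> 4 * n + 8"
    and hM0: "\<forall>a. a \<le> 2 * n + 1 \<longrightarrow> mem c a = mem0 a"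
    using I unfolding LoopInv_def by auto
  have rk: "1 \<le> Rank k" "Rank k \<le> n" using RB[of k] I' kn by auto
  have m1: "mem c k = Rank k" using hM0 mem0_rank[of k] I' kn by auto
  have m2: "mem c (Rank k + n) = LCP (Rank k)" using hM0 mem0_lcp[of "Rank k"] rk by auto
  have m3: "mem c (Suc (Rank k + n)) = LCP (Suc (Rank k))" using hM0 mem0_lcp[of "Suc (Rank k)"] rk by auto
  have lb: "LCP (Rank k) \<le> n" "LCP (Suc (Rank k)) \<le> n" using LB rk by auto
  have ml: "length (outs k) \<le> n" using outs_len[of k] kn by auto
  have I'': "regs c (Suc 0) = 2 * n + 2" "Suc 0 \<le> k" using I' by auto
  have hO: "\<forall>i<length (outs k). mem c (2 * n + 2 + 2 * i) = fst (outs k ! i) \<and>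
                          mem c (2 * n + 3 + 2 * i) = snd (outs k ! i)"
    using I unfolding LoopInv_def by auto
  have oS: "outs (Suc k) = outs k @ (if usef k then [(k, k + Lf k - 1)] else [])"
    using outs_Suc I' by auto
  have pS: "prevL (Suc k) = Lf k" using prevL_Suc I' by auto
  note bnds = kn rk lb ml
  have kn': "\<not> n < k" using kn by auto
  note facts = I' I'' m1 m2 m3 kn'
  show ?thesis
  proof (cases "LCP (Rank k) < LCP (Suc (Rank k))")
    case True
    have Lfk: "Lf k = LCP (Suc (Rank k))" using True unfolding Lf_def by simp
    show ?thesis
    proof (cases "LCP (Suc (Rank k)) < prevL k")
      case True2: True
      show ?thesis
        using True True2 bnds
        apply -
        apply (rule R_stepA, simp, (auto simp: G_def ex_simps facts hR hM)[1], simp add: ex_simps facts)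
        apply (rule R_stepB, simp, simp, (auto simp: G_def ex_simps facts hR hM)[1], simp add: ex_simps facts)+
        apply (rule R_done)
        apply (unfold LoopInv_def)
        using hO hM0 apply (auto simp: facts I'' pS oS usef_def Lfk nth_append less_Suc_eq hR hM)
        done
    next
      case False2: False
      show ?thesis
      proof (cases "LCP (Suc (Rank k)) = 0")
        case True3: True
        show ?thesis
          using True True3 by simp
      next
        case False3: False
        show ?thesis
          using True False2 False3 bnds
          apply -
        apply (rule R_stepA, simp, (auto simp: G_def ex_simps facts hR hM)[1], simp add: ex_simps facts)
        apply (rule R_stepB, simp, simp, (auto simp: G_def ex_simps facts hR hM)[1], simp add: ex_simps facts)+
        apply (rule R_done)
        apply (unfold LoopInv_def)
        using hO hM0 apply (auto simp: facts I'' pS oS usef_def Lfk nth_append less_Suc_eq hR hM)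
        done
      qed
    qed
  next
    case False
    have Lfk: "Lf k = LCP (Rank k)" using False unfolding Lf_def by simp
    show ?thesis
    proof (cases "LCP (Rank k) < prevL k")
      case True2: True
      show ?thesis
        using False True2 bnds
        apply -
        apply (rule R_stepA, simp, (auto simp: G_def ex_simps facts hR hM)[1], simp add: ex_simps facts)
        apply (rule R_stepB, simp, simp, (auto simp: G_def ex_simps facts hR hM)[1], simp add: ex_simps facts)+
        apply (rule R_done)
        apply (unfold LoopInv_def)
        using hO hM0 apply (auto simp: facts I'' pS oS usef_def Lfk nth_append less_Suc_eq hR hM)
        done
    next
      case False2: False
      show ?thesis
      proof (cases "LCP (Rank k) = 0")
        case True3: True
        show ?thesis
          using False False2 True3 bnds
          apply -
        apply (rule R_stepA, simp, (auto simp: G_def ex_simps facts hR hM)[1], simp add: ex_simps facts)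
        apply (rule R_stepB, simp, simp, (auto simp: G_def ex_simps facts hR hM)[1], simp add: ex_simps facts)+
        apply (rule R_done)
        apply (unfold LoopInv_def)
        using hO hM0 apply (auto simp: facts I'' pS oS usef_def Lfk nth_append less_Suc_eq hR hM)
        done
      next
        case False3: False
        show ?thesis
          using False False2 False3 bnds
          apply -
        apply (rule R_stepA, simp, (auto simp: G_def ex_simps facts hR hM)[1], simp add: ex_simps facts)
        apply (rule R_stepB, simp, simp, (auto simp: G_def ex_simps facts hR hM)[1], simp add: ex_simps facts)+
        apply (rule R_done)
        apply (unfold LoopInv_def)
        using hO hM0 apply (auto simp: facts I'' pS oS usef_def Lfk nth_append less_Suc_eq hR hM)
        done
      qed
    qed
  qed
qed

definition Qf :: "config \<Rightarrow> bool" where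
  "Qf c \<longleftrightarrow> halted prg c \<and> G c \<and> output_of c = outs (Suc n)"

lemma final: assumes I: "LoopInv (Suc n) c" shows "R c 3 Qf"
proof -
  have I': "pc c = 6" "regs c 0 = length (outs (Suc n))" "regs c 1 = 2 * n + 2" "regs c 2 = n"
    "regs c 3 = Suc n" "regs c (Suc 0) = 2 * n + 2"
    using I unfolding LoopInv_def by auto
  have hR: "\<forall>r. regs c r \<le> 4 * n + 8" and hM: "\<forall>a. mem c a \<le> 4 * n + 8"
    using I unfolding LoopInv_def by auto
  have hO: "\<forall>i<length (outs (Suc n)). mem c (2 * n + 2 + 2 * i) = fst (outs (Suc n) ! i) \<and>
                          mem c (2 * n + 3 + 2 * i) = snd (outs (Suc n) ! i)"
    using I unfolding LoopInv_def by auto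
  have oo: "map (\<lambda>i. (mem c (2 * n + 2 + 2 * i), mem c (2 * n + 2 + 2 * i + 1))) [0..<length (outs (Suc n))] = outs (Suc n)"
  proof (rule nth_equalityI)
    fix i assume "i < length (map (\<lambda>i. (mem c (2 * n + 2 + 2 * i), mem c (2 * n + 2 + 2 * i + 1))) [0..<length (outs (Suc n))])"
    then have i: "i < length (outs (Suc n))" by simp
    have h1: "mem c (2 * n + 2 + 2 * i) = fst (outs (Suc n) ! i)" using hO i by blast
    have e: "2 * n + 2 + 2 * i + 1 = 2 * n + 3 + 2 * i" by simp
    have h2: "mem c (2 * n + 2 + 2 * i + 1) = snd (outs (Suc n) ! i)" unfolding e using hO i by blast
    show "map (\<lambda>i. (mem c (2 * n + 2 + 2 * i), mem c (2 * n + 2 + 2 * i + 1))) [0..<length (outs (Suc n))] ! i = outs (Suc n) ! i"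
      using i h1 h2 by (simp add: prod_eq_iff)
  qed simp
  show ?thesis
    apply (rule R_stepA, simp, (auto simp: G_def ex_simps I' hR hM)[1], simp add: ex_simps I')
    apply (rule R_stepB, simp, simp, (auto simp: G_def ex_simps I' hR hM)[1], simp add: ex_simps I')+
    apply (rule R_done)
    using oo apply (auto simp: Qf_def G_def ex_simps I' hR hM output_of_def)
    done
qed

lemma all_loop: "1 \<le> k \<Longrightarrow> k \<le> Suc n \<Longrightarrow> R c0 (6 + 24 * (k - 1)) (LoopInv k)"
proof (induction k)
  case (Suc k)
  show ?case
  proof (cases "k = 0")
    case True then show ?thesis using init by simp
  next
    case False
    then have "R c0 (6 + 24 * (k - 1)) (LoopInv k)" using Suc by auto
    then have "R c0 (6 + 24 * (k - 1)) (\<lambda>c'. R c' 24 (LoopInv (Suc k)))"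
      by (rule R_mono) (use loop_iter Suc in auto)
    then have "R c0 (6 + 24 * (k - 1) + 24) (LoopInv (Suc k))" by (rule R_trans)
    then show ?thesis using False by (simp add: algebra_simps)
  qed
qed simp

lemma prog_main: "\<exists>t\<le>24 * n + 9. (\<forall>t'<t. G (run prg t' c0)) \<and> Qf (run prg t c0)"
proof -
  have "R c0 (6 + 24 * n) (LoopInv (Suc n))" using all_loop[of "Suc n"] by simp
  then have "R c0 (6 + 24 * n) (\<lambda>c'. R c' 3 Qf)" by (rule R_mono) (use final in auto)
  then have "R c0 (6 + 24 * n + 3) Qf" by (rule R_trans)
  then obtain d where "d \<le> 6 + 24 * n + 3" "\<forall>t<d. G (run prg t c0)" "Qf (run prg d c0)"
    unfolding R_def by auto
  then show ?thesis by (intro exI[of _ d]) auto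
qed

end

lemma pow_bound: "4 * n + 8 \<le> ((n::nat) + 2) ^ 40"
proof -
  have p1: "(n + 2) ^ 3 \<le> (n + 2) ^ 40" by (rule power_increasing) auto
  have "2 * 2 \<le> (n + 2) * (n + 2)" by (rule mult_mono) auto
  then have "4 * (n + 2) \<le> ((n + 2) * (n + 2)) * (n + 2)" by simp
  also have "\<dots> = (n + 2) ^ 3" by (simp add: power3_eq_cube)
  finally have h: "4 * n + 8 \<le> (n + 2) ^ 3" by simp
  show ?thesis using order_trans[OF h p1] .
qed

theorem lemma6:
  "\<exists>(P :: instr list) (C :: nat).
     \<forall>(S :: 'a::linorder list) SA Rank LCP.
       is_SA S SA \<and> is_rank S SA Rank \<and> is_LCP S SA LCP \<longrightarrow>
       (let n = length S; c0 = input_config n Rank LCP in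
        \<exists>t. t \<le> C * (n + 1) \<and> halted P (run P t c0) \<and>
            (\<forall>t' < t. addr_used P (run P t' c0) \<le> C * (n + 1)) \<and>
            (\<forall>t' \<le> t. (\<forall>r. regs (run P t' c0) r \<le> (n + 2) ^ C) \<and>
                        (\<forall>a. mem (run P t' c0) a \<le> (n + 2) ^ C)) \<and>
            sorted_wrt (\<lambda>x y. fst x < fst y) (output_of (run P t c0)) \<and>
            set (output_of (run P t c0)) = {(k, j). useful_LLR S k j})"
proof (intro exI[of _ prg] exI[of _ 40] allI impI)
  fix S :: "'a list" and SA Rank LCP :: "nat \<Rightarrow> nat"
  assume H: "is_SA S SA \<and> is_rank S SA Rank \<and> is_LCP S SA LCP"
  interpret sa: sactx S SA Rank LCP using H by unfold_locales auto
  define n where "n = length S"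
  interpret pr: prog n Rank LCP
  proof
    fix i assume "1 \<le> i" "i \<le> n"
    then show "1 \<le> Rank i \<and> Rank i \<le> n" using sa.Rank_ok[of i] n_def by auto
  next
    fix i assume "1 \<le> i" "i \<le> Suc n"
    then show "LCP i \<le> n" using sa.LCP_bound[of i] n_def by auto
  qed
  obtain t where t: "t \<le> 24 * n + 9" "\<forall>t'<t. pr.G (run prg t' (input_config n Rank LCP))"
    "pr.Qf (run prg t (input_config n Rank LCP))"
    using pr.prog_main by blast
  have LL: "pr.Lf k = sa.Lk k" for k by (simp add: pr.Lf_def sa.Lk_def)
  have pb: "4 * n + 8 \<le> (n + 2) ^ 40" by (rule pow_bound)
  have Gt: "pr.G (run prg t' (input_config n Rank LCP))" if "t' \<le> t" for t'
    using t that unfolding pr.Qf_def by (cases "t' = t") auto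
  have out: "output_of (run prg t (input_config n Rank LCP)) = pr.outs (Suc n)"
    using t(3) unfolding pr.Qf_def by auto
  have sorted: "sorted_wrt (\<lambda>x y. fst x < fst y) (pr.outs (Suc n))"
  proof -
    have "sorted_wrt (<) (filter pr.usef [1..<Suc n])"
      by (rule sorted_wrt_filter) (simp del: upt_Suc)
    then show ?thesis unfolding pr.outs_def by (simp add: sorted_wrt_map del: upt_Suc)
  qed
  have setq: "set (pr.outs (Suc n)) = {(k, j). useful_LLR S k j}"
  proof (intro set_eqI iffI)
    fix x assume "x \<in> set (pr.outs (Suc n))"
    then obtain k where k: "1 \<le> k" "k \<le> n" "pr.usef k" "x = (k, k + pr.Lf k - 1)"
      unfolding pr.outs_def by auto
    then show "x \<in> {(k, j). useful_LLR S k j}"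
      unfolding sa.useful_iff sa.LLR_iff pr.usef_def pr.prevL_def LL using n_def
      by (auto split: if_splits)
  next
    fix x assume "x \<in> {(k, j). useful_LLR S k j}"
    then obtain k j where x: "x = (k, j)" "useful_LLR S k j" by auto
    then have "1 \<le> k \<and> k \<le> n \<and> pr.usef k \<and> j = k + pr.Lf k - 1"
      unfolding sa.useful_iff sa.LLR_iff pr.usef_def pr.prevL_def LL using n_def
      by (auto split: if_splits)
    then show "x \<in> set (pr.outs (Suc n))" unfolding pr.outs_def using x
      by (auto simp del: upt_Suc intro!: image_eqI)
  qed
  show "let n = length S; c0 = input_config n Rank LCP in
        \<exists>t. t \<le> 40 * (n + 1) \<and> halted prg (run prg t c0) \<and>
            (\<forall>t' < t. addr_used prg (run prg t' c0) \<le> 40 * (n + 1)) \<and>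
            (\<forall>t' \<le> t. (\<forall>r. regs (run prg t' c0) r \<le> (n + 2) ^ 40) \<and>
                        (\<forall>a. mem (run prg t' c0) a \<le> (n + 2) ^ 40)) \<and>
            sorted_wrt (\<lambda>x y. fst x < fst y) (output_of (run prg t c0)) \<and>
            set (output_of (run prg t c0)) = {(k, j). useful_LLR S k j}"
    unfolding Let_def n_def[symmetric]
  proof (intro exI[of _ t] conjI allI impI)
    show "t \<le> 40 * (n + 1)" using t(1) by simp
    show "halted prg (run prg t (input_config n Rank LCP))" using t(3) unfolding pr.Qf_def by auto
    fix t' assume "t' < t"
    then show "addr_used prg (run prg t' (input_config n Rank LCP)) \<le> 40 * (n + 1)"
      using t(2) unfolding pr.G_def by force
  next
    fix t' r assume "t' \<le> t"
    then show "regs (run prg t' (input_config n Rank LCP)) r \<le> (n + 2) ^ 40"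
      using Gt[of t'] pb unfolding pr.G_def by (meson order_trans)
  next
    fix t' a assume "t' \<le> t"
    then show "mem (run prg t' (input_config n Rank LCP)) a \<le> (n + 2) ^ 40"
      using Gt[of t'] pb unfolding pr.G_def by (meson order_trans)
  next
    show "sorted_wrt (\<lambda>x y. fst x < fst y) (output_of (run prg t (input_config n Rank LCP)))"
      using out sorted by simp
    show "set (output_of (run prg t (input_config n Rank LCP))) = {(k, j). useful_LLR S k j}"
      using out setq by simp
  qed
qed

end
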